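(* A stage strategy $s_1^*$ of player 1 is confound-defeating if and only if $\mathrm{supp}(s_1^* )$ is strictly $u_1(\cdot,\alpha_2)$-cyclically monotone for every $(\alpha_0,\alpha_2)\in B_0(s_1^* )$. Moreover, if $u_1$ is strictly cyclically separable, then $s_1^*$ is confound-defeating if and only if $\mathrm{supp}(s_1^* )$ is strictly $u_1$-cyclically monotone.
   Context: Three players $0,1,2$ have finite action sets $A_0,A_1,A_2$; $Y_0,Y_1$ are finite signal sets. Player 0 takes $a_0$, generating a private signal $y_0\sim\rho_0(\cdot\mid a_0)$ for player 1; players 1 and 2 then simultaneously take $a_1,a_2$, generating a public signal $y_1\sim\rho_1(\cdot\mid a_1,a_2)$. Assume: (i) $\rho_0(y_0\mid a_0)>0$ always; (ii) $\rho_1(y_1\mid a_1,a_2)>0$ implies $\rho_1(y_1\mid a_1,a_2')>0$; (iii) for every $a_2$, the vectors $(\rho_1(\cdot\mid a_1,a_2))_{a_1\in A_1}$ are linearly independent. Stage strategies: $\alpha_0\in\Delta(A_0)$, $\alpha_2\in\Delta(A_2)$, $s_1:Y_0\to\Delta(A_1)$; $\|\cdot\|$ is the sup norm. $\gamma(\alpha_0,s_1)[y_0,a_1]=\sum_{a_0}\alpha_0(a_0)\rho_0(y_0\mid a_0)s_1(y_0)[a_1]$ with marginals $\rho(\alpha_0)$ on $Y_0$ and $\phi(\alpha_0,s_1)$ on $A_1$; $p(\alpha_0,s_1,\alpha_2)[y_1]=\sum\alpha_0(a_0)\rho_0(y_0\mid a_0)s_1(y_0)[a_1]\alpha_2(a_2)\rho_1(y_1\mid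 a_1,a_2)$. Payoffs $u_0:A_0\times A_1\to\mathbb{R}$, $u_i:Y_0\times A_1\times A_2\to\mathbb{R}$, extended by expectation; $u_1(y_0,a_1,\alpha_2)=\sum_{a_2}\alpha_2(a_2)u_1(y_0,a_1,a_2)$ and $u_1(\cdot,\alpha_2)$ denotes this as a function on $Y_0\times A_1$. $B(s_1)$: set of $(\alpha_0,\alpha_2)$ with $\mathrm{supp}(\alpha_0)\subset\arg\max_{a_0}u_0(a_0,s_1)$, $\mathrm{supp}(\alpha_2)\subset\arg\max_{a_2}u_2(\alpha_0,s_1,a_2)$. $B_\eta(s_1)$ ($\eta\ge0$): set of $(\alpha_0,\alpha_2)$ such that some $s_1'$ has $(\alpha_0,\alpha_2)\in B(s_1')$ and $\|p(\alpha_0,s_1,\alpha_2)-p(\alpha_0,s_1',\alpha_2)\|\le\eta$. Confound-defeating: $s_1^*$ satisfies at least one of (CD1) for every $\varepsilon>0$ there is $\eta>0$ such that for every $(\alpha_0,\alpha_2)\in B_\eta(s_1^* )$ and every $s_1'$ with $\|s_1'-s_1^*\|>\varepsilon$ and $\|p(\alpha_0,s_1',\alpha_2)-p(\alpha_0,s_1^*,\alpha_2)\|<\eta$ there is $\tilde s_1$ with $p(\alpha_0,\tilde s_1,\alpha_2)=p(\alpha_0,s_1',\alpha_2)$ and $u_1(\alpha_0,\tilde s_1,\alpha_2)>u_1(\alpha_0,s_1',\alpha_2)$; (CD2) for every $(\alpha_0,\alpha_2)\in B_0(s_1^* )$, $\gamma(\alpha_0,s_1^* )$ uniquely maximizes $\sum\gamma(y_0,a_1)u_1(y_0,a_1,\alpha_2)$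 over $\gamma\in\Delta(Y_0\times A_1)$ with marginals $\rho(\alpha_0)$ and $\phi(\alpha_0,s_1^* )$. $\mathrm{supp}(s_1)=\{(y_0,a_1):a_1\in\mathrm{supp}(s_1(y_0))\}$. For $u:Y_0\times A_1\to\mathbb{R}$, $S\subset Y_0\times A_1$ is strictly $u$-cyclically monotone if for every finite collection $\{(x_i,y_i)\}_{i=1}^N\subset S$ with $\{(x_i,y_i)\}_{i=1}^N\neq\{(x_i,y_{i+1})\}_{i=1}^N$ (where $y_{N+1}=y_1$), $\sum_iu(x_i,y_i)>\sum_iu(x_i,y_{i+1})$. $u_1$ is strictly cyclically separable if whenever $S$ is strictly $u_1(\cdot,\alpha_2)$-cyclically monotone for some $\alpha_2\in\Delta(A_2)$, it is so for all $\alpha_2\in\Delta(A_2)$; in that case $S$ is called strictly $u_1$-cyclically monotone. *)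

theory Defs
  imports Complex_Main
begin

(* Conventions:
   rho0 a0 y0   = rho_0(y0 | a0)
   rho1 a1 a2 y1 = rho_1(y1 | a1, a2)
   s1 y0 a1     = s_1(y0)[a1]
   Distributions over a finite type are functions into real. *)

definition is_dist :: "('a::finite \<Rightarrow> real) \<Rightarrow> bool" where
  "is_dist \<alpha> \<longleftrightarrow> (\<forall>x. 0 \<le> \<alpha> x) \<and> (\<Sum>x\<in>UNIV. \<alpha> x) = 1"

definition is_strat :: "('y::finite \<Rightarrow> 'a::finite \<Rightarrow> real) \<Rightarrow> bool" where
  "is_strat s \<longleftrightarrow> (\<forall>y. is_dist (s y))"

definition supn :: "('a::finite \<Rightarrow> real) \<Rightarrow> real" where
  "supn f = Max (range (\<lambda>x. \<bar>f x\<bar>))"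

definition supn2 :: "('y::finite \<Rightarrow> 'a::finite \<Rightarrow> real) \<Rightarrow> real" where
  "supn2 s = Max (range (\<lambda>(y, a). \<bar>s y a\<bar>))"

definition gam :: "('a0::finite \<Rightarrow> 'y0::finite \<Rightarrow> real) \<Rightarrow> ('a0 \<Rightarrow> real)
    \<Rightarrow> ('y0 \<Rightarrow> 'a1::finite \<Rightarrow> real) \<Rightarrow> 'y0 \<Rightarrow> 'a1 \<Rightarrow> real" where
  "gam rho0 \<alpha>0 s y0 a1 = (\<Sum>a0\<in>UNIV. \<alpha>0 a0 * rho0 a0 y0 * s y0 a1)"

definition rho_marg :: "('a0::finite \<Rightarrow> 'y0::finite \<Rightarrow> real) \<Rightarrow> ('a0 \<Rightarrow> real) \<Rightarrow> 'y0 \<Rightarrow> real" where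
  "rho_marg rho0 \<alpha>0 y0 = (\<Sum>a0\<in>UNIV. \<alpha>0 a0 * rho0 a0 y0)"

definition phi :: "('a0::finite \<Rightarrow> 'y0::finite \<Rightarrow> real) \<Rightarrow> ('a0 \<Rightarrow> real)
    \<Rightarrow> ('y0 \<Rightarrow> 'a1::finite \<Rightarrow> real) \<Rightarrow> 'a1 \<Rightarrow> real" where
  "phi rho0 \<alpha>0 s a1 = (\<Sum>y0\<in>UNIV. gam rho0 \<alpha>0 s y0 a1)"

definition pdist :: "('a0::finite \<Rightarrow> 'y0::finite \<Rightarrow> real) \<Rightarrow> ('a1::finite \<Rightarrow> 'a2::finite \<Rightarrow> 'y1 \<Rightarrow> real)
    \<Rightarrow> ('a0 \<Rightarrow> real) \<Rightarrow> ('y0 \<Rightarrow> 'a1 \<Rightarrow> real) \<Rightarrow> ('a2 \<Rightarrow> real) \<Rightarrow> 'y1 \<Rightarrow> real" where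
  "pdist rho0 rho1 \<alpha>0 s \<alpha>2 y1 =
     (\<Sum>y0\<in>UNIV. \<Sum>a1\<in>UNIV. \<Sum>a2\<in>UNIV. gam rho0 \<alpha>0 s y0 a1 * \<alpha>2 a2 * rho1 a1 a2 y1)"

definition U0 :: "('a0::finite \<Rightarrow> 'y0::finite \<Rightarrow> real) \<Rightarrow> ('a0 \<Rightarrow> 'a1::finite \<Rightarrow> real)
    \<Rightarrow> 'a0 \<Rightarrow> ('y0 \<Rightarrow> 'a1 \<Rightarrow> real) \<Rightarrow> real" where
  "U0 rho0 u0 a0 s = (\<Sum>y0\<in>UNIV. \<Sum>a1\<in>UNIV. rho0 a0 y0 * s y0 a1 * u0 a0 a1)"

definition Ui :: "('a0::finite \<Rightarrow> 'y0::finite \<Rightarrow> real) \<Rightarrow> ('y0 \<Rightarrow> 'a1::finite \<Rightarrow> 'a2::finite \<Rightarrow> real)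
    \<Rightarrow> ('a0 \<Rightarrow> real) \<Rightarrow> ('y0 \<Rightarrow> 'a1 \<Rightarrow> real) \<Rightarrow> ('a2 \<Rightarrow> real) \<Rightarrow> real" where
  "Ui rho0 u \<alpha>0 s \<alpha>2 =
     (\<Sum>y0\<in>UNIV. \<Sum>a1\<in>UNIV. \<Sum>a2\<in>UNIV. gam rho0 \<alpha>0 s y0 a1 * \<alpha>2 a2 * u y0 a1 a2)"

definition umix :: "('y0 \<Rightarrow> 'a1 \<Rightarrow> 'a2::finite \<Rightarrow> real) \<Rightarrow> ('a2 \<Rightarrow> real) \<Rightarrow> 'y0 \<Rightarrow> 'a1 \<Rightarrow> real" where
  "umix u \<alpha>2 y0 a1 = (\<Sum>a2\<in>UNIV. \<alpha>2 a2 * u y0 a1 a2)"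

text \<open>Best responses B(s1): u2(alpha0,s1,a2) is Ui with the point mass at a2.\<close>
definition BR :: "('a0::finite \<Rightarrow> 'y0::finite \<Rightarrow> real) \<Rightarrow> ('a0 \<Rightarrow> 'a1::finite \<Rightarrow> real)
    \<Rightarrow> ('y0 \<Rightarrow> 'a1 \<Rightarrow> 'a2::finite \<Rightarrow> real) \<Rightarrow> ('y0 \<Rightarrow> 'a1 \<Rightarrow> real)
    \<Rightarrow> (('a0 \<Rightarrow> real) \<times> ('a2 \<Rightarrow> real)) set" where
  "BR rho0 u0 u2 s = {(\<alpha>0, \<alpha>2). is_dist \<alpha>0 \<and> is_dist \<alpha>2 \<and>
      (\<forall>a0. \<alpha>0 a0 \<noteq> 0 \<longrightarrow> (\<forall>b. U0 rho0 u0 b s \<le> U0 rho0 u0 a0 s)) \<and>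
      (\<forall>a2. \<alpha>2 a2 \<noteq> 0 \<longrightarrow> (\<forall>b. Ui rho0 u2 \<alpha>0 s (\<lambda>x. if x = b then 1 else 0)
                                   \<le> Ui rho0 u2 \<alpha>0 s (\<lambda>x. if x = a2 then 1 else 0)))}"

definition BReta :: "('a0::finite \<Rightarrow> 'y0::finite \<Rightarrow> real) \<Rightarrow> ('a1::finite \<Rightarrow> 'a2::finite \<Rightarrow> 'y1::finite \<Rightarrow> real)
    \<Rightarrow> ('a0 \<Rightarrow> 'a1 \<Rightarrow> real) \<Rightarrow> ('y0 \<Rightarrow> 'a1 \<Rightarrow> 'a2 \<Rightarrow> real) \<Rightarrow> real \<Rightarrow> ('y0 \<Rightarrow> 'a1 \<Rightarrow> real)
    \<Rightarrow> (('a0 \<Rightarrow> real) \<times> ('a2 \<Rightarrow> real)) set" where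
  "BReta rho0 rho1 u0 u2 \<eta> s = {(\<alpha>0, \<alpha>2). \<exists>s'. is_strat s' \<and> (\<alpha>0, \<alpha>2) \<in> BR rho0 u0 u2 s' \<and>
      supn (\<lambda>y1. pdist rho0 rho1 \<alpha>0 s \<alpha>2 y1 - pdist rho0 rho1 \<alpha>0 s' \<alpha>2 y1) \<le> \<eta>}"

definition CD1 :: "('a0::finite \<Rightarrow> 'y0::finite \<Rightarrow> real) \<Rightarrow> ('a1::finite \<Rightarrow> 'a2::finite \<Rightarrow> 'y1::finite \<Rightarrow> real)
    \<Rightarrow> ('a0 \<Rightarrow> 'a1 \<Rightarrow> real) \<Rightarrow> ('y0 \<Rightarrow> 'a1 \<Rightarrow> 'a2 \<Rightarrow> real) \<Rightarrow> ('y0 \<Rightarrow> 'a1 \<Rightarrow> 'a2 \<Rightarrow> real)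
    \<Rightarrow> ('y0 \<Rightarrow> 'a1 \<Rightarrow> real) \<Rightarrow> bool" where
  "CD1 rho0 rho1 u0 u1 u2 s = (\<forall>\<epsilon>>0. \<exists>\<eta>>0. \<forall>(\<alpha>0, \<alpha>2) \<in> BReta rho0 rho1 u0 u2 \<eta> s. \<forall>s'.
      is_strat s' \<and> supn2 (\<lambda>y a. s' y a - s y a) > \<epsilon> \<and>
      supn (\<lambda>y1. pdist rho0 rho1 \<alpha>0 s' \<alpha>2 y1 - pdist rho0 rho1 \<alpha>0 s \<alpha>2 y1) < \<eta> \<longrightarrow>
      (\<exists>st. is_strat st \<and> pdist rho0 rho1 \<alpha>0 st \<alpha>2 = pdist rho0 rho1 \<alpha>0 s' \<alpha>2 \<and>
            Ui rho0 u1 \<alpha>0 st \<alpha>2 > Ui rho0 u1 \<alpha>0 s' \<alpha>2))"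

definition coupling :: "('y0::finite \<Rightarrow> real) \<Rightarrow> ('a1::finite \<Rightarrow> real) \<Rightarrow> ('y0 \<Rightarrow> 'a1 \<Rightarrow> real) \<Rightarrow> bool" where
  "coupling m1 m2 g \<longleftrightarrow> (\<forall>y a. 0 \<le> g y a) \<and> (\<Sum>y\<in>UNIV. \<Sum>a\<in>UNIV. g y a) = 1 \<and>
     (\<forall>y. (\<Sum>a\<in>UNIV. g y a) = m1 y) \<and> (\<forall>a. (\<Sum>y\<in>UNIV. g y a) = m2 a)"

definition CD2 :: "('a0::finite \<Rightarrow> 'y0::finite \<Rightarrow> real) \<Rightarrow> ('a1::finite \<Rightarrow> 'a2::finite \<Rightarrow> 'y1::finite \<Rightarrow> real)
    \<Rightarrow> ('a0 \<Rightarrow> 'a1 \<Rightarrow> real) \<Rightarrow> ('y0 \<Rightarrow> 'a1 \<Rightarrow> 'a2 \<Rightarrow> real) \<Rightarrow> ('y0 \<Rightarrow> 'a1 \<Rightarrow> 'a2 \<Rightarrow> real)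
    \<Rightarrow> ('y0 \<Rightarrow> 'a1 \<Rightarrow> real) \<Rightarrow> bool" where
  "CD2 rho0 rho1 u0 u1 u2 s = (\<forall>(\<alpha>0, \<alpha>2) \<in> BReta rho0 rho1 u0 u2 0 s.
      let m1 = rho_marg rho0 \<alpha>0; m2 = phi rho0 \<alpha>0 s; gs = gam rho0 \<alpha>0 s;
          val = (\<lambda>g. \<Sum>y\<in>UNIV. \<Sum>a\<in>UNIV. g y a * umix u1 \<alpha>2 y a) in
      coupling m1 m2 gs \<and> (\<forall>g. coupling m1 m2 g \<and> g \<noteq> gs \<longrightarrow> val g < val gs))"

definition confound_defeating where
  "confound_defeating rho0 rho1 u0 u1 u2 s \<longleftrightarrow>
     CD1 rho0 rho1 u0 u1 u2 s \<or> CD2 rho0 rho1 u0 u1 u2 s"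

definition supp1 :: "('y \<Rightarrow> 'a \<Rightarrow> real) \<Rightarrow> ('y \<times> 'a) set" where
  "supp1 s = {(y, a). s y a \<noteq> 0}"

text \<open>Strict cyclic monotonicity; a finite collection is a nonempty list
  (x_1,y_1),...,(x_N,y_N), compared as a set with its cyclic shift.\<close>
definition shift_pairs :: "('x \<times> 'y) list \<Rightarrow> ('x \<times> 'y) list" where
  "shift_pairs xs = map (\<lambda>i. (fst (xs ! i), snd (xs ! (Suc i mod length xs)))) [0..<length xs]"

definition strictly_cm :: "('x \<times> 'y) set \<Rightarrow> ('x \<Rightarrow> 'y \<Rightarrow> real) \<Rightarrow> bool" where
  "strictly_cm S u \<longleftrightarrow> (\<forall>xs. xs \<noteq> [] \<and> set xs \<subseteq> S \<and> set xs \<noteq> set (shift_pairs xs) \<longrightarrow>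
      (\<Sum>p\<leftarrow>xs. u (fst p) (snd p)) > (\<Sum>p\<leftarrow>shift_pairs xs. u (fst p) (snd p)))"

definition strictly_cyc_separable :: "('y0 \<Rightarrow> 'a1 \<Rightarrow> 'a2::finite \<Rightarrow> real) \<Rightarrow> bool" where
  "strictly_cyc_separable u1 \<longleftrightarrow> (\<forall>S. (\<exists>\<alpha>2. is_dist \<alpha>2 \<and> strictly_cm S (umix u1 \<alpha>2)) \<longrightarrow>
      (\<forall>\<alpha>2. is_dist \<alpha>2 \<longrightarrow> strictly_cm S (umix u1 \<alpha>2)))"

definition strictly_u1_cm :: "('y0 \<Rightarrow> 'a1 \<Rightarrow> 'a2::finite \<Rightarrow> real) \<Rightarrow> ('y0 \<times> 'a1) set \<Rightarrow> bool" where
  "strictly_u1_cm u1 S \<longleftrightarrow> (\<exists>\<alpha>2. is_dist \<alpha>2 \<and> strictly_cm S (umix u1 \<alpha>2))"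

end

theory Submission
  imports Defs "HOL-Analysis.Analysis"
begin


definition cnt :: "'b list \<Rightarrow> 'b \<Rightarrow> real" where
  "cnt L p = (\<Sum>q\<leftarrow>L. if q = p then 1 else 0)"

lemma cnt_simps[simp]: "cnt [] p = 0" "cnt (q # L) p = (if q = p then 1 else 0) + cnt L p"
  by (simp_all add: cnt_def)

lemma cnt_nonneg: "0 \<le> cnt L p" by (induction L) auto
lemma cnt_pos_iff: "0 < cnt L p \<longleftrightarrow> p \<in> set L"
  by (induction L) (auto simp: add_nonneg_pos add_pos_nonneg cnt_nonneg)
lemma cnt_zero_iff: "cnt L p = 0 \<longleftrightarrow> p \<notin> set L"
  using cnt_pos_iff[of L p] cnt_nonneg[of L p] by linarith
lemma cnt_le_length: "cnt L p \<le> real (length L)" by (induction L) auto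

lemma mult_if01: "(if P then 1 else 0) * (x::real) = (if P then x else 0)" by simp

lemma sum_cnt: "(\<Sum>y\<in>UNIV. \<Sum>a\<in>UNIV. cnt L (y, a) * f y a) = (\<Sum>q\<leftarrow>L. f (fst q) (snd q))"
  for f :: "'y::finite \<Rightarrow> 'a::finite \<Rightarrow> real"
proof (induction L)
  case Nil then show ?case by simp
next
  case (Cons q L)
  have "(\<Sum>y\<in>UNIV. \<Sum>a\<in>UNIV. cnt (q # L) (y, a) * f y a) =
     (\<Sum>y\<in>UNIV. \<Sum>a\<in>UNIV. (if q = (y,a) then 1 else 0) * f y a) + (\<Sum>y\<in>UNIV. \<Sum>a\<in>UNIV. cnt L (y, a) * f y a)"
    by (simp only: cnt_simps distrib_right sum.distrib)
  also have "(\<Sum>y\<in>UNIV. \<Sum>a\<in>UNIV. (if q = (y,a) then 1 else 0) * f y a) = f (fst q) (snd q)"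
  proof -
    obtain y0 a0 where q: "q = (y0, a0)" by (cases q)
    have "(\<Sum>y\<in>UNIV. \<Sum>a\<in>UNIV. (if q = (y,a) then 1 else 0) * f y a) =
          (\<Sum>y\<in>UNIV. if y = y0 then (\<Sum>a\<in>UNIV. if a = a0 then f y a else 0) else 0)"
      unfolding q by (intro sum.cong refl) (auto simp: mult_if01 intro!: sum.cong)
    then show ?thesis by (simp add: q)
  qed
  finally show ?case using Cons by simp
qed

lemma sum_cnt_row: "(\<Sum>a\<in>UNIV. cnt L (y, a)) = (\<Sum>q\<leftarrow>L. if fst q = y then 1 else 0)"
  for y :: 'y and L :: "('y \<times> 'a::finite) list"
proof (induction L)
  case Nil then show ?case by simp
next
  case (Cons q L)
  then show ?case by (cases q) (auto simp: sum.distrib)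
qed

lemma sum_cnt_col: "(\<Sum>y\<in>UNIV. cnt L (y, a)) = (\<Sum>q\<leftarrow>L. if snd q = a then 1 else 0)"
  for a :: 'a and L :: "('y::finite \<times> 'a) list"
proof (induction L)
  case Nil then show ?case by simp
next
  case (Cons q L)
  then show ?case by (cases q) (auto simp: sum.distrib)
qed

lemma shift_len[simp]: "length (shift_pairs xs) = length xs"
  by (simp add: shift_pairs_def)

lemma shift_nth: "i < length xs \<Longrightarrow> shift_pairs xs ! i = (fst (xs ! i), snd (xs ! (Suc i mod length xs)))"
  by (simp add: shift_pairs_def)

lemma shift_fst: "map fst (shift_pairs xs) = map fst xs"
  by (rule nth_equalityI) (auto simp: shift_nth)

lemma shift_snd: "map snd (shift_pairs xs) = rotate1 (map snd xs)"
  apply (rule nth_equalityI)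
   apply (auto simp: shift_nth nth_rotate1)
  apply (subst nth_map)
   apply (metis less_nat_zero_code mod_less_divisor neq0_conv)
  by simp

lemma sum_list_rotate1: "sum_list (rotate1 L) = sum_list (L :: real list)"
  by (cases L) auto

lemma shift_row: "(\<Sum>q\<leftarrow>shift_pairs xs. if fst q = y then 1 else (0::real)) = (\<Sum>q\<leftarrow>xs. if fst q = y then 1 else 0)"
proof -
  have "(\<Sum>q\<leftarrow>shift_pairs xs. if fst q = y then 1 else (0::real)) = sum_list (map (\<lambda>x. if x = y then 1 else 0) (map fst (shift_pairs xs)))"
    by (simp add: comp_def)
  also have "\<dots> = (\<Sum>q\<leftarrow>xs. if fst q = y then 1 else 0)" by (simp add: shift_fst comp_def)
  finally show ?thesis .
qed

lemma shift_col: "(\<Sum>q\<leftarrow>shift_pairs xs. if snd q = a then 1 else (0::real)) = (\<Sum>q\<leftarrow>xs. if snd q = a then 1 else 0)"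
proof -
  have "(\<Sum>q\<leftarrow>shift_pairs xs. if snd q = a then 1 else (0::real)) = sum_list (map (\<lambda>x. if x = a then 1 else 0) (map snd (shift_pairs xs)))"
    by (simp add: comp_def)
  also have "\<dots> = sum_list (rotate1 (map (\<lambda>x. if x = a then 1 else (0::real)) (map snd xs)))"
    by (simp add: shift_snd rotate1_map)
  also have "\<dots> = (\<Sum>q\<leftarrow>xs. if snd q = a then 1 else 0)" by (simp add: sum_list_rotate1 comp_def)
  finally show ?thesis .
qed

lemma E_row: "(\<Sum>a\<in>UNIV. cnt xs (y, a) - cnt (shift_pairs xs) (y, a)) = 0"
  for xs :: "('y \<times> 'a::finite) list"
  by (simp add: sum_subtractf sum_cnt_row shift_row)

lemma E_col: "(\<Sum>y\<in>UNIV. cnt xs (y, a) - cnt (shift_pairs xs) (y, a)) = 0"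
  for xs :: "('y::finite \<times> 'a) list"
  by (simp add: sum_subtractf sum_cnt_col shift_col)

lemma E_val: "(\<Sum>y\<in>UNIV. \<Sum>a\<in>UNIV. (cnt xs (y, a) - cnt (shift_pairs xs) (y, a)) * f y a)
   = (\<Sum>q\<leftarrow>xs. f (fst q) (snd q)) - (\<Sum>q\<leftarrow>shift_pairs xs. f (fst q) (snd q))"
  for f :: "'y::finite \<Rightarrow> 'a::finite \<Rightarrow> real"
  by (simp add: left_diff_distrib sum_subtractf sum_cnt)

lemma exists_neg_term:
  fixes g :: "'b::finite \<Rightarrow> real"
  assumes "sum g UNIV = 0" "g x > 0" shows "\<exists>z. g z < 0"
proof (rule ccontr)
  assume "\<not> ?thesis"
  then have "\<forall>z. 0 \<le> g z" by (auto simp: not_less)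
  then have "g x \<le> sum g UNIV" by (intro member_le_sum) auto
  with assms show False by simp
qed

lemma exists_pos_term:
  fixes g :: "'b::finite \<Rightarrow> real"
  assumes "sum g UNIV = 0" "g x < 0" shows "\<exists>z. g z > 0"
  using exists_neg_term[of "\<lambda>z. - g z" x] assms by (auto simp: sum_negf)



lemma cyc_neg_aux:
  fixes u :: "'y::finite \<Rightarrow> 'a::finite \<Rightarrow> real"
  assumes cm: "strictly_cm S u"
  shows "\<And>d :: 'y \<Rightarrow> 'a \<Rightarrow> real. card {p. d (fst p) (snd p) \<noteq> 0} = n \<Longrightarrow>
    (\<forall>y. (\<Sum>a\<in>UNIV. d y a) = 0) \<Longrightarrow> (\<forall>a. (\<Sum>y\<in>UNIV. d y a) = 0) \<Longrightarrow>
    (\<forall>y a. d y a < 0 \<longrightarrow> (y, a) \<in> S) \<Longrightarrow> (\<exists>y a. d y a \<noteq> 0) \<Longrightarrow>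
    (\<Sum>y\<in>UNIV. \<Sum>a\<in>UNIV. d y a * u y a) < 0"
proof (induction n rule: less_induct)
  case (less n d)
  note rows = less.prems(2) and cols = less.prems(3) and neg = less.prems(4)
  define N where "N = {p. d (fst p) (snd p) < 0}"
  obtain p0 where p0: "p0 \<in> N"
  proof -
    obtain y a where ya: "d y a \<noteq> 0" using less.prems(5) by blast
    show ?thesis
    proof (cases "d y a < 0")
      case True then show ?thesis using that[of "(y,a)"] by (simp add: N_def)
    next
      case False
      then have "d y a > 0" using ya by simp
      then obtain z where "d z a < 0" using exists_neg_term[of "\<lambda>z. d z a" y] cols by auto
      then show ?thesis using that[of "(z,a)"] by (simp add: N_def)
    qed
  qed
  have succ: "\<exists>q'. q' \<in> N \<and> d (fst q) (snd q') > 0" if qN: "q \<in> N" for q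
  proof -
    obtain a where a: "d (fst q) a > 0"
    proof -
      have "d (fst q) (snd q) < 0" using qN by (simp add: N_def)
      then show ?thesis using exists_pos_term[of "\<lambda>a. d (fst q) a" "snd q"] rows that by auto
    qed
    then obtain z where "d z a < 0" using exists_neg_term[of "\<lambda>z. d z a" "fst q"] cols by auto
    then show ?thesis using a by (intro exI[of _ "(z,a)"]) (simp add: N_def)
  qed
  define f :: "'y \<times> 'a \<Rightarrow> 'y \<times> 'a" where "f q = (SOME q'. q' \<in> N \<and> d (fst q) (snd q') > 0)" for q
  have fN: "f q \<in> N" and fpos: "d (fst q) (snd (f q)) > 0" if "q \<in> N" for q
    using someI_ex[OF succ[OF that]] unfolding f_def by auto
  have iterN: "(f ^^ k) p0 \<in> N" for k
    by (induction k) (auto simp: p0 fN)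
  have "\<not> inj (\<lambda>k. (f ^^ k) p0)"
  proof
    assume "inj (\<lambda>k. (f ^^ k) p0)"
    then have "finite (UNIV :: nat set)"
      using finite_imageD[of "\<lambda>k. (f ^^ k) p0" UNIV] finite by blast
    then show False by simp
  qed
  then obtain i j where ij: "(f ^^ i) p0 = (f ^^ j) p0" "i \<noteq> j" unfolding inj_def by blast
  obtain i j where ij: "(f ^^ i) p0 = (f ^^ j) p0" "i < j"
    using ij by (metis linorder_neqE_nat)
  define q0 where "q0 = (f ^^ i) p0"
  define m where "m = j - i"
  have m0: "m > 0" using ij by (simp add: m_def)
  have per: "(f ^^ m) q0 = q0"
  proof -
    have "(f ^^ m) q0 = (f ^^ (m + i)) p0" by (simp add: q0_def funpow_add)
    also have "m + i = j" using ij by (simp add: m_def)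
    finally show ?thesis using ij by (simp add: q0_def)
  qed
  have gN: "(f ^^ k) q0 \<in> N" for k
    using iterN[of "k + i"] by (simp add: q0_def funpow_add)
  define xs where "xs = map (\<lambda>k. (f ^^ k) q0) [0..<m]"
  have xsne: "xs \<noteq> []" using m0 by (simp add: xs_def)
  have lenxs: "length xs = m" by (simp add: xs_def)
  have setxsN: "set xs \<subseteq> N" using gN by (auto simp: xs_def)
  have xsneg: "d (fst p) (snd p) < 0" if "p \<in> set xs" for p
    using setxsN that by (auto simp: N_def)
  have setxsS: "set xs \<subseteq> S" using xsneg neg by fastforce
  have shpos: "d (fst p) (snd p) > 0" if pin: "p \<in> set (shift_pairs xs)" for p
  proof -
    obtain k where k: "k < m" "p = shift_pairs xs ! k"
      using pin by (auto simp: in_set_conv_nth lenxs)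
    have "(f ^^ (Suc k mod m)) q0 = f ((f ^^ k) q0)"
    proof (cases "Suc k < m")
      case True then show ?thesis by simp
    next
      case False
      then have "Suc k = m" using k by simp
      then have "Suc k mod m = 0" by simp
      moreover have "f ((f ^^ k) q0) = (f ^^ Suc k) q0" by simp
      ultimately show ?thesis using per \<open>Suc k = m\<close> by simp
    qed
    moreover have "xs ! k = (f ^^ k) q0" "xs ! (Suc k mod m) = (f ^^ (Suc k mod m)) q0"
      using k m0 by (simp_all add: xs_def)
    ultimately have "p = (fst ((f ^^ k) q0), snd (f ((f ^^ k) q0)))"
      using k shift_nth[of k xs] lenxs by simp
    then show ?thesis using fpos[OF gN[of k]] by simp
  qed
  have disj: "p \<notin> set (shift_pairs xs)" if "p \<in> set xs" for p
  proof
    assume "p \<in> set (shift_pairs xs)"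
    from shpos[OF this] xsneg[OF that] show False by simp
  qed
  have "xs ! 0 = q0" using m0 by (simp add: xs_def)
  then have "q0 \<in> set xs" using m0 lenxs nth_mem[of 0 xs] by simp
  then have sets: "set xs \<noteq> set (shift_pairs xs)" using disj by blast
  have strict: "(\<Sum>p\<leftarrow>xs. u (fst p) (snd p)) > (\<Sum>p\<leftarrow>shift_pairs xs. u (fst p) (snd p))"
  proof -
    have "xs \<noteq> [] \<and> set xs \<subseteq> S \<and> set xs \<noteq> set (shift_pairs xs)" using xsne setxsS sets by simp
    then show ?thesis using cm unfolding strictly_cm_def by (elim allE[of _ xs]) (rule mp)
  qed
  define E where "E y a = cnt xs (y, a) - cnt (shift_pairs xs) (y, a)" for y a
  define U where "U = set xs \<union> set (shift_pairs xs)"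
  have Epos: "E (fst p) (snd p) > 0" if "p \<in> set xs" for p
  proof -
    have "cnt (shift_pairs xs) p = 0" "cnt xs p > 0" using that disj[OF that] by (simp_all add: cnt_pos_iff cnt_zero_iff)
    then show ?thesis by (simp add: E_def)
  qed
  have Eneg: "E (fst p) (snd p) < 0" if "p \<in> set (shift_pairs xs)" for p
  proof -
    have "p \<notin> set xs" using that disj by blast
    then have "cnt xs p = 0" "cnt (shift_pairs xs) p > 0" using that by (simp_all add: cnt_pos_iff cnt_zero_iff)
    then show ?thesis by (simp add: E_def)
  qed
  have Ezero: "E (fst p) (snd p) = 0" if "p \<notin> U" for p
  proof -
    have "cnt xs p = 0" "cnt (shift_pairs xs) p = 0" using that by (simp_all add: U_def cnt_zero_iff)
    then show ?thesis by (simp add: E_def)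
  qed
  define r where "r p = - d (fst p) (snd p) / E (fst p) (snd p)" for p
  have rpos: "r p > 0" if "p \<in> U" for p
  proof -
    from that consider "p \<in> set xs" | "p \<in> set (shift_pairs xs)" by (auto simp: U_def)
    then show ?thesis
    proof cases
      case 1
      then show ?thesis using xsneg[OF 1] Epos[OF 1] unfolding r_def by (intro divide_pos_pos) simp_all
    next
      case 2
      then show ?thesis using shpos[OF 2] Eneg[OF 2] unfolding r_def by (intro divide_neg_neg) simp_all
    qed
  qed
  define c where "c = Min (r ` U)"
  have finU: "finite U" and neU: "U \<noteq> {}" using xsne by (auto simp: U_def)
  have cle: "c \<le> r p" if "p \<in> U" for p using that finU by (simp add: c_def)
  have "c \<in> r ` U" unfolding c_def using finU neU by (intro Min_in) auto
  then obtain ps where ps: "ps \<in> U" "r ps = c" by auto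
  have cpos: "c > 0" using rpos[OF ps(1)] ps(2) by simp
  define d' where "d' y a = d y a + c * E y a" for y a
  have rows': "\<forall>y. (\<Sum>a\<in>UNIV. d' y a) = 0"
    using rows E_row[of xs] by (simp add: d'_def sum.distrib E_def sum_distrib_left[symmetric])
  have cols': "\<forall>a. (\<Sum>y\<in>UNIV. d' y a) = 0"
    using cols E_col[of xs] by (simp add: d'_def sum.distrib E_def sum_distrib_left[symmetric])
  have d'shift: "d' (fst p) (snd p) \<ge> 0" if "p \<in> set (shift_pairs xs)" for p
  proof -
    have "p \<in> U" using that by (simp add: U_def)
    then have "c \<le> - d (fst p) (snd p) / E (fst p) (snd p)" using cle r_def by simp
    then have "c * E (fst p) (snd p) \<ge> - d (fst p) (snd p)"
    proof -
      have "(- d (fst p) (snd p) / E (fst p) (snd p)) * E (fst p) (snd p) \<le> c * E (fst p) (snd p)"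
        using mult_right_mono_neg[OF \<open>c \<le> _\<close>, of "E (fst p) (snd p)"] Eneg[OF that] by simp
      then show ?thesis using Eneg[OF that] by simp
    qed
    then show ?thesis by (simp add: d'_def)
  qed
  have neg': "\<forall>y a. d' y a < 0 \<longrightarrow> (y, a) \<in> S"
  proof (intro allI impI)
    fix y a assume lt: "d' y a < 0"
    show "(y, a) \<in> S"
    proof (cases "(y,a) \<in> U")
      case True
      then show ?thesis using d'shift[of "(y,a)"] lt setxsS by (auto simp: U_def)
    next
      case False
      then have "d' y a = d y a" using Ezero[of "(y,a)"] by (simp add: d'_def)
      then show ?thesis using lt neg by simp
    qed
  qed
  have Unz: "d (fst p) (snd p) \<noteq> 0" if "p \<in> U" for p
  proof -
    from that consider "p \<in> set xs" | "p \<in> set (shift_pairs xs)" by (auto simp: U_def)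
    then show ?thesis
    proof cases
      case 1 then show ?thesis using xsneg[OF 1] by simp
    next
      case 2 then show ?thesis using shpos[OF 2] by simp
    qed
  qed
  have sub: "{p. d' (fst p) (snd p) \<noteq> 0} \<subset> {p. d (fst p) (snd p) \<noteq> 0}"
  proof
    show "{p. d' (fst p) (snd p) \<noteq> 0} \<subseteq> {p. d (fst p) (snd p) \<noteq> 0}"
    proof
      fix p assume "p \<in> {p. d' (fst p) (snd p) \<noteq> 0}"
      then have h: "d' (fst p) (snd p) \<noteq> 0" by simp
      show "p \<in> {p. d (fst p) (snd p) \<noteq> 0}"
      proof (cases "p \<in> U")
        case True then show ?thesis using Unz by simp
      next
        case False then show ?thesis using Ezero[OF False] h by (simp add: d'_def)
      qed
    qed
    have Enz: "E (fst ps) (snd ps) \<noteq> 0"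
    proof -
      from ps(1) consider "ps \<in> set xs" | "ps \<in> set (shift_pairs xs)" by (auto simp: U_def)
      then show ?thesis
      proof cases
        case 1 then show ?thesis using Epos[OF 1] by simp
      next
        case 2 then show ?thesis using Eneg[OF 2] by simp
      qed
    qed
    have "d' (fst ps) (snd ps) = 0"
      using ps(2) Enz unfolding d'_def r_def by (simp add: field_simps)
    then show "{p. d' (fst p) (snd p) \<noteq> 0} \<noteq> {p. d (fst p) (snd p) \<noteq> 0}"
      using Unz[OF ps(1)] by blast
  qed
  have lt: "card {p. d' (fst p) (snd p) \<noteq> 0} < n"
    using psubset_card_mono[OF _ sub] less.prems(1) by simp
  have le': "(\<Sum>y\<in>UNIV. \<Sum>a\<in>UNIV. d' y a * u y a) \<le> 0"
  proof (cases "\<exists>y a. d' y a \<noteq> 0")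
    case True
    show ?thesis using less.IH[OF lt refl rows' cols' neg' True] by simp
  next
    case False then show ?thesis by simp
  qed
  have Eval: "(\<Sum>y\<in>UNIV. \<Sum>a\<in>UNIV. E y a * u y a) > 0"
    using strict E_val[of xs u] by (simp add: E_def)
  have "(\<Sum>y\<in>UNIV. \<Sum>a\<in>UNIV. d y a * u y a) =
        (\<Sum>y\<in>UNIV. \<Sum>a\<in>UNIV. d' y a * u y a) - c * (\<Sum>y\<in>UNIV. \<Sum>a\<in>UNIV. E y a * u y a)"
    by (simp add: d'_def algebra_simps sum.distrib sum_distrib_left)
  also have "\<dots> < 0" using le' Eval cpos by (smt (verit) mult_pos_pos)
  finally show ?case .
qed

lemma cyc_neg:
  fixes u d :: "'y::finite \<Rightarrow> 'a::finite \<Rightarrow> real"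
  assumes "strictly_cm S u" "\<forall>y. (\<Sum>a\<in>UNIV. d y a) = 0" "\<forall>a. (\<Sum>y\<in>UNIV. d y a) = 0"
    "\<forall>y a. d y a < 0 \<longrightarrow> (y, a) \<in> S" "\<exists>y a. d y a \<noteq> 0"
  shows "(\<Sum>y\<in>UNIV. \<Sum>a\<in>UNIV. d y a * u y a) < 0"
  using cyc_neg_aux[OF assms(1) refl assms(2-5)] .



lemma exists_max:
  fixes w :: "'y::finite \<Rightarrow> 'a::finite \<Rightarrow> real"
    and cs :: "'k::finite \<Rightarrow> 'y \<Rightarrow> 'a \<Rightarrow> real" and b :: "'k \<Rightarrow> real"
  assumes s0: "is_strat s0" and c0: "\<forall>k. (\<Sum>y\<in>UNIV. \<Sum>a\<in>UNIV. cs k y a * s0 y a) = b k"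
  shows "\<exists>sm. is_strat sm \<and> (\<forall>k. (\<Sum>y\<in>UNIV. \<Sum>a\<in>UNIV. cs k y a * sm y a) = b k) \<and>
     (\<forall>s. is_strat s \<and> (\<forall>k. (\<Sum>y\<in>UNIV. \<Sum>a\<in>UNIV. cs k y a * s y a) = b k) \<longrightarrow>
        (\<Sum>y\<in>UNIV. \<Sum>a\<in>UNIV. w y a * s y a) \<le> (\<Sum>y\<in>UNIV. \<Sum>a\<in>UNIV. w y a * sm y a))"
proof -
  define sv :: "real^('y \<times> 'a) \<Rightarrow> 'y \<Rightarrow> 'a \<Rightarrow> real" where "sv v y a = v $ (y, a)" for v y a
  define K where "K = {v. (\<forall>i. 0 \<le> v $ i) \<and> (\<forall>y. (\<Sum>a\<in>UNIV. v $ (y,a)) = 1) \<and>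
      (\<forall>k. (\<Sum>y\<in>UNIV. \<Sum>a\<in>UNIV. cs k y a * v $ (y,a)) = b k)}"
  have Kstrat: "v \<in> K \<longleftrightarrow> is_strat (sv v) \<and> (\<forall>k. (\<Sum>y\<in>UNIV. \<Sum>a\<in>UNIV. cs k y a * sv v y a) = b k)" for v
    unfolding K_def is_strat_def is_dist_def sv_def by auto
  have svv: "sv (\<chi> p. s (fst p) (snd p)) = s" for s
    unfolding sv_def by auto
  have cl: "closed K"
    unfolding K_def
    by (intro closed_Collect_conj closed_Collect_all closed_Collect_le closed_Collect_eq continuous_intros)
  have "K \<subseteq> cbox 0 1"
  proof
    fix v assume v: "v \<in> K"
    show "v \<in> cbox 0 1" unfolding mem_box_cart
    proof
      fix i :: "'y \<times> 'a"
      obtain y a where i: "i = (y, a)" by (cases i)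
      have "v $ (y,a) \<le> (\<Sum>a\<in>UNIV. v $ (y,a))"
        by (rule member_le_sum) (use v in \<open>auto simp: K_def\<close>)
      then show "0 $ i \<le> v $ i \<and> v $ i \<le> 1 $ i" using v i by (auto simp: K_def)
    qed
  qed
  then have "bounded K" using bounded_cbox bounded_subset by blast
  with cl have cp: "compact K" by (simp add: compact_eq_bounded_closed)
  have ne: "(\<chi> p. s0 (fst p) (snd p)) \<in> K" using s0 c0 by (simp add: Kstrat svv)
  have ct: "continuous_on K (\<lambda>v. \<Sum>y\<in>UNIV. \<Sum>a\<in>UNIV. w y a * sv v y a)"
    unfolding sv_def by (intro continuous_intros)
  obtain vm where vm: "vm \<in> K" and mx: "\<forall>v\<in>K. (\<Sum>y\<in>UNIV. \<Sum>a\<in>UNIV. w y a * sv v y a) \<le> (\<Sum>y\<in>UNIV. \<Sum>a\<in>UNIV. w y a * sv vm y a)"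
    using continuous_attains_sup[OF cp _ ct] ne by blast
  show ?thesis
  proof (intro exI[of _ "sv vm"] conjI allI impI)
    show "is_strat (sv vm)" using vm Kstrat by blast
    show "(\<Sum>y\<in>UNIV. \<Sum>a\<in>UNIV. cs k y a * sv vm y a) = b k" for k using vm Kstrat by blast
    fix s assume "is_strat s \<and> (\<forall>k. (\<Sum>y\<in>UNIV. \<Sum>a\<in>UNIV. cs k y a * s y a) = b k)"
    then have "(\<chi> p. s (fst p) (snd p)) \<in> K" by (simp add: Kstrat svv)
    from mx[rule_format, OF this] show "(\<Sum>y\<in>UNIV. \<Sum>a\<in>UNIV. w y a * s y a) \<le> (\<Sum>y\<in>UNIV. \<Sum>a\<in>UNIV. w y a * sv vm y a)"
      by (simp add: svv)
  qed
qed



lemma m1_pos: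
  assumes "is_dist \<alpha>0" "\<forall>a0 y0. rho0 a0 y0 > 0"
  shows "rho_marg rho0 \<alpha>0 y > 0"
proof -
  have nn: "\<forall>a. 0 \<le> \<alpha>0 a" and s1: "sum \<alpha>0 UNIV = 1" using assms(1) by (auto simp: is_dist_def)
  obtain a where a: "\<alpha>0 a > 0"
  proof (rule ccontr)
    assume "\<not> thesis"
    then have "\<forall>a. \<alpha>0 a = 0" using nn that by (metis less_eq_real_def)
    then show False using s1 by simp
  qed
  have "\<alpha>0 a * rho0 a y \<le> rho_marg rho0 \<alpha>0 y"
  proof -
    have "0 \<le> \<alpha>0 x * rho0 x y" for x using nn assms(2) by (simp add: less_imp_le)
    then show ?thesis unfolding rho_marg_def by (intro member_le_sum) auto
  qed
  moreover have "\<alpha>0 a * rho0 a y > 0" using a assms(2) by simp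
  ultimately show ?thesis by linarith
qed

lemma gam_eq: "gam rho0 \<alpha>0 s y a = rho_marg rho0 \<alpha>0 y * s y a"
  by (simp add: gam_def rho_marg_def sum_distrib_right)

lemma pdist_lin: "pdist rho0 rho1 \<alpha>0 s \<alpha>2 y1 =
   (\<Sum>y\<in>UNIV. \<Sum>a\<in>UNIV. (rho_marg rho0 \<alpha>0 y * (\<Sum>a2\<in>UNIV. \<alpha>2 a2 * rho1 a a2 y1)) * s y a)"
  unfolding pdist_def gam_eq sum_distrib_left sum_distrib_right
  by (intro sum.cong refl) (simp add: mult_ac)

lemma pdist_phi: "pdist rho0 rho1 \<alpha>0 s \<alpha>2 y1 =
   (\<Sum>a\<in>UNIV. phi rho0 \<alpha>0 s a * (\<Sum>a2\<in>UNIV. \<alpha>2 a2 * rho1 a a2 y1))"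
proof -
  have "pdist rho0 rho1 \<alpha>0 s \<alpha>2 y1 = (\<Sum>y\<in>UNIV. \<Sum>a\<in>UNIV. gam rho0 \<alpha>0 s y a * (\<Sum>a2\<in>UNIV. \<alpha>2 a2 * rho1 a a2 y1))"
    unfolding pdist_def sum_distrib_left by (intro sum.cong refl) (simp add: mult_ac)
  also have "\<dots> = (\<Sum>a\<in>UNIV. \<Sum>y\<in>UNIV. gam rho0 \<alpha>0 s y a * (\<Sum>a2\<in>UNIV. \<alpha>2 a2 * rho1 a a2 y1))"
    by (rule sum.swap)
  also have "\<dots> = (\<Sum>a\<in>UNIV. phi rho0 \<alpha>0 s a * (\<Sum>a2\<in>UNIV. \<alpha>2 a2 * rho1 a a2 y1))"
    unfolding phi_def by (simp add: sum_distrib_right)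
  finally show ?thesis .
qed

lemma Ui_val: "Ui rho0 u \<alpha>0 s \<alpha>2 = (\<Sum>y\<in>UNIV. \<Sum>a\<in>UNIV. gam rho0 \<alpha>0 s y a * umix u \<alpha>2 y a)"
  unfolding Ui_def umix_def sum_distrib_left by (intro sum.cong refl) (simp add: mult_ac)

lemma Ui_lin: "Ui rho0 u \<alpha>0 s \<alpha>2 = (\<Sum>y\<in>UNIV. \<Sum>a\<in>UNIV. (rho_marg rho0 \<alpha>0 y * umix u \<alpha>2 y a) * s y a)"
  unfolding Ui_val gam_eq by (simp add: mult_ac)

lemma coupling_gam:
  assumes "is_strat s" "is_dist \<alpha>0" "\<forall>a0. is_dist (rho0 a0)" "\<forall>a0 y0. rho0 a0 y0 > 0"
  shows "coupling (rho_marg rho0 \<alpha>0) (phi rho0 \<alpha>0 s) (gam rho0 \<alpha>0 s)"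
proof -
  have m1: "rho_marg rho0 \<alpha>0 y > 0" for y using m1_pos assms(2,4) by blast
  have srow: "(\<Sum>a\<in>UNIV. s y a) = 1" and snn: "0 \<le> s y a" for y a
    using assms(1) by (auto simp: is_strat_def is_dist_def)
  have row: "(\<Sum>a\<in>UNIV. gam rho0 \<alpha>0 s y a) = rho_marg rho0 \<alpha>0 y" for y
    by (simp add: gam_eq sum_distrib_left[symmetric] srow)
  have "(\<Sum>y\<in>UNIV. rho_marg rho0 \<alpha>0 y) = (\<Sum>a0\<in>UNIV. \<alpha>0 a0 * (\<Sum>y\<in>UNIV. rho0 a0 y))"
    unfolding rho_marg_def by (subst sum.swap) (simp add: sum_distrib_left)
  also have "\<dots> = 1" using assms(2,3) by (simp add: is_dist_def)
  finally have tot: "(\<Sum>y\<in>UNIV. rho_marg rho0 \<alpha>0 y) = 1" .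
  have nn: "0 \<le> gam rho0 \<alpha>0 s y a" for y a
    unfolding gam_eq using m1[of y] snn[of y a] by simp
  have tot2: "(\<Sum>y\<in>UNIV. \<Sum>a\<in>UNIV. gam rho0 \<alpha>0 s y a) = 1" using row tot by simp
  show ?thesis unfolding coupling_def
    using nn row tot2 by (simp add: phi_def)
qed

lemma pert:
  fixes s :: "'y::finite \<Rightarrow> 'a::finite \<Rightarrow> real" and u :: "'y \<Rightarrow> 'a \<Rightarrow> real"
  assumes ss: "is_strat s" and a0d: "is_dist \<alpha>0" and fs: "\<forall>a0 y0. rho0 a0 y0 > 0"
    and xsne: "xs \<noteq> []" and xsS: "set xs \<subseteq> supp1 s" and sets: "set xs \<noteq> set (shift_pairs xs)"
    and le: "(\<Sum>p\<leftarrow>xs. u (fst p) (snd p)) \<le> (\<Sum>p\<leftarrow>shift_pairs xs. u (fst p) (snd p))"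
  shows "\<exists>s2. is_strat s2 \<and> gam rho0 \<alpha>0 s2 \<noteq> gam rho0 \<alpha>0 s \<and> phi rho0 \<alpha>0 s2 = phi rho0 \<alpha>0 s \<and>
     (\<Sum>y\<in>UNIV. \<Sum>a\<in>UNIV. gam rho0 \<alpha>0 s y a * u y a) \<le> (\<Sum>y\<in>UNIV. \<Sum>a\<in>UNIV. gam rho0 \<alpha>0 s2 y a * u y a)"
proof -
  define m1 where "m1 = rho_marg rho0 \<alpha>0"
  have m1p: "m1 y > 0" for y unfolding m1_def using m1_pos a0d fs by blast
  have srow: "(\<Sum>a\<in>UNIV. s y a) = 1" and snn: "0 \<le> s y a" for y a
    using ss by (auto simp: is_strat_def is_dist_def)
  define E where "E y a = cnt (shift_pairs xs) (y, a) - cnt xs (y, a)" for y a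
  have Erow: "(\<Sum>a\<in>UNIV. E y a) = 0" for y
    using E_row[of xs y] by (simp add: E_def sum_subtractf)
  have Ecol: "(\<Sum>y\<in>UNIV. E y a) = 0" for a
    using E_col[of xs a] by (simp add: E_def sum_subtractf)
  define v where "v p = s (fst p) (snd p) * m1 (fst p)" for p
  define tau where "tau = Min (v ` set xs) / real (length xs)"
  have vpos: "v p > 0" if "p \<in> set xs" for p
  proof -
    have "s (fst p) (snd p) \<noteq> 0" using that xsS by (auto simp: supp1_def)
    then have "s (fst p) (snd p) > 0" using snn[of "fst p" "snd p"] by simp
    then show ?thesis using m1p[of "fst p"] by (simp add: v_def)
  qed
  have minin: "Min (v ` set xs) \<in> v ` set xs" using xsne by (intro Min_in) auto
  have minpos: "Min (v ` set xs) > 0" using minin vpos by auto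
  have lenpos: "real (length xs) > 0" using xsne by simp
  have taupos: "tau > 0" unfolding tau_def using minpos lenpos by simp
  define s2 where "s2 y a = s y a + tau * E y a / m1 y" for y a
  have gam2: "gam rho0 \<alpha>0 s2 y a = gam rho0 \<alpha>0 s y a + tau * E y a" for y a
    unfolding gam_eq m1_def[symmetric] s2_def using m1p[of y] by (simp add: field_simps)
  have s2nn: "0 \<le> s2 y a" for y a
  proof (cases "E y a \<ge> 0")
    case True then show ?thesis unfolding s2_def using snn[of y a] taupos m1p[of y] by simp
  next
    case False
    then have "cnt xs (y,a) > 0" using cnt_nonneg[of "shift_pairs xs" "(y,a)"] by (simp add: E_def)
    then have inx: "(y,a) \<in> set xs" by (simp add: cnt_pos_iff)
    have "- E y a \<le> real (length xs)"
      using cnt_nonneg[of "shift_pairs xs" "(y,a)"] cnt_le_length[of xs "(y,a)"] by (simp add: E_def)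
    then have "tau * (- E y a) \<le> tau * real (length xs)" using taupos by (intro mult_left_mono) auto
    also have "\<dots> = Min (v ` set xs)" unfolding tau_def using lenpos by simp
    also have "\<dots> \<le> v (y,a)" using inx by simp
    also have "\<dots> = s y a * m1 y" by (simp add: v_def)
    finally have "tau * (- E y a) \<le> s y a * m1 y" .
    from divide_right_mono[OF this, of "m1 y"] m1p[of y]
    have "tau * (- E y a) / m1 y \<le> s y a" by simp
    then show ?thesis unfolding s2_def by simp
  qed
  have s2row: "(\<Sum>a\<in>UNIV. s2 y a) = 1" for y
  proof -
    have "(\<Sum>a\<in>UNIV. s2 y a) = (\<Sum>a\<in>UNIV. s y a) + tau / m1 y * (\<Sum>a\<in>UNIV. E y a)"
      unfolding s2_def by (simp add: sum.distrib sum_distrib_left)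
    then show ?thesis using srow Erow by simp
  qed
  have s2s: "is_strat s2" unfolding is_strat_def is_dist_def using s2nn s2row by simp
  have phieq: "phi rho0 \<alpha>0 s2 = phi rho0 \<alpha>0 s"
  proof
    fix a
    have "phi rho0 \<alpha>0 s2 a = phi rho0 \<alpha>0 s a + tau * (\<Sum>y\<in>UNIV. E y a)"
      unfolding phi_def gam2 by (simp add: sum.distrib sum_distrib_left)
    then show "phi rho0 \<alpha>0 s2 a = phi rho0 \<alpha>0 s a" using Ecol by simp
  qed
  obtain p where p: "(p \<in> set xs \<and> p \<notin> set (shift_pairs xs)) \<or> (p \<notin> set xs \<and> p \<in> set (shift_pairs xs))"
    using sets by blast
  have "E (fst p) (snd p) \<noteq> 0"
  proof -
    have "(cnt xs p = 0 \<and> cnt (shift_pairs xs) p > 0) \<or> (cnt xs p > 0 \<and> cnt (shift_pairs xs) p = 0)"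
      using p by (auto simp: cnt_pos_iff cnt_zero_iff)
    then show ?thesis by (auto simp: E_def)
  qed
  then have "gam rho0 \<alpha>0 s2 (fst p) (snd p) \<noteq> gam rho0 \<alpha>0 s (fst p) (snd p)"
    unfolding gam2 using taupos by simp
  then have gne: "gam rho0 \<alpha>0 s2 \<noteq> gam rho0 \<alpha>0 s" by metis
  have "(\<Sum>y\<in>UNIV. \<Sum>a\<in>UNIV. gam rho0 \<alpha>0 s2 y a * u y a) =
        (\<Sum>y\<in>UNIV. \<Sum>a\<in>UNIV. gam rho0 \<alpha>0 s y a * u y a) + tau * (\<Sum>y\<in>UNIV. \<Sum>a\<in>UNIV. E y a * u y a)"
    unfolding gam2 by (simp add: distrib_right sum.distrib sum_distrib_left mult.assoc)
  moreover have "(\<Sum>y\<in>UNIV. \<Sum>a\<in>UNIV. E y a * u y a) \<ge> 0"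
  proof -
    have "(\<Sum>y\<in>UNIV. \<Sum>a\<in>UNIV. E y a * u y a) = - (\<Sum>y\<in>UNIV. \<Sum>a\<in>UNIV. (cnt xs (y, a) - cnt (shift_pairs xs) (y, a)) * u y a)"
      unfolding E_def by (simp add: sum_negf[symmetric] algebra_simps)
    then show ?thesis using E_val[of xs u] le by simp
  qed
  ultimately have "(\<Sum>y\<in>UNIV. \<Sum>a\<in>UNIV. gam rho0 \<alpha>0 s y a * u y a) \<le> (\<Sum>y\<in>UNIV. \<Sum>a\<in>UNIV. gam rho0 \<alpha>0 s2 y a * u y a)"
    using taupos by simp
  then show ?thesis using s2s gne phieq by blast
qed

lemma supn2_pos:
  fixes f :: "'y::finite \<Rightarrow> 'a::finite \<Rightarrow> real"
  assumes "f y a \<noteq> 0" shows "supn2 f > 0"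
proof -
  have "\<bar>f y a\<bar> \<le> supn2 f" unfolding supn2_def
    by (rule Max_ge) (auto intro: image_eqI[of _ _ "(y,a)"])
  then show ?thesis using assms by simp
qed

lemma supn_zero: "supn (\<lambda>x::'b::finite. 0) = 0"
  by (simp add: supn_def)

lemma ex_argmax: "\<exists>a. \<forall>b. (f :: 'b::finite \<Rightarrow> real) b \<le> f a"
proof -
  have "Max (range f) \<in> range f" by (intro Min_in Max_in) auto
  then obtain a where "f a = Max (range f)" by (metis imageE)
  then show ?thesis by (intro exI[of _ a]) auto
qed

lemma point_dist: "is_dist (\<lambda>x::'b::finite. if x = a then 1 else 0)"
  by (simp add: is_dist_def)

lemma BReta_mono: "(\<alpha>0, \<alpha>2) \<in> BReta rho0 rho1 u0 u2 0 s \<Longrightarrow> 0 \<le> \<eta> \<Longrightarrow> (\<alpha>0, \<alpha>2) \<in> BReta rho0 rho1 u0 u2 \<eta> s"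
  unfolding BReta_def by auto

lemma BReta_dist: "(\<alpha>0, \<alpha>2) \<in> BReta rho0 rho1 u0 u2 \<eta> s \<Longrightarrow> is_dist \<alpha>0 \<and> is_dist \<alpha>2"
  unfolding BReta_def BR_def by auto

lemma CM_point:
  fixes s :: "'y0::finite \<Rightarrow> 'a1::finite \<Rightarrow> real"
  assumes ss: "is_strat s" and a0d: "is_dist \<alpha>0" and r0: "\<forall>a0. is_dist (rho0 a0)" and fs: "\<forall>a0 y0. rho0 a0 y0 > 0"
    and cm: "strictly_cm (supp1 s) (umix u1 \<alpha>2)"
  shows "coupling (rho_marg rho0 \<alpha>0) (phi rho0 \<alpha>0 s) (gam rho0 \<alpha>0 s) \<and>
    (\<forall>g. coupling (rho_marg rho0 \<alpha>0) (phi rho0 \<alpha>0 s) g \<and> g \<noteq> gam rho0 \<alpha>0 s \<longrightarrow>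
      (\<Sum>y\<in>UNIV. \<Sum>a\<in>UNIV. g y a * umix u1 \<alpha>2 y a) < (\<Sum>y\<in>UNIV. \<Sum>a\<in>UNIV. gam rho0 \<alpha>0 s y a * umix u1 \<alpha>2 y a))"
proof (intro conjI allI impI)
  let ?gs = "gam rho0 \<alpha>0 s"
  have cg: "coupling (rho_marg rho0 \<alpha>0) (phi rho0 \<alpha>0 s) ?gs" using coupling_gam ss a0d r0 fs by blast
  then show "coupling (rho_marg rho0 \<alpha>0) (phi rho0 \<alpha>0 s) ?gs" .
  fix g assume gh: "coupling (rho_marg rho0 \<alpha>0) (phi rho0 \<alpha>0 s) g \<and> g \<noteq> ?gs"
  define d where "d y a = g y a - ?gs y a" for y a
  have rows: "\<forall>y. (\<Sum>a\<in>UNIV. d y a) = 0" using gh cg by (simp add: d_def sum_subtractf coupling_def)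
  have cols: "\<forall>a. (\<Sum>y\<in>UNIV. d y a) = 0" using gh cg by (simp add: d_def sum_subtractf coupling_def)
  have neg: "\<forall>y a. d y a < 0 \<longrightarrow> (y, a) \<in> supp1 s"
  proof (intro allI impI)
    fix y a assume "d y a < 0"
    moreover have "0 \<le> g y a" using gh by (simp add: coupling_def)
    ultimately have "?gs y a \<noteq> 0" by (simp add: d_def)
    then show "(y, a) \<in> supp1 s" by (simp add: gam_eq supp1_def)
  qed
  have nz: "\<exists>y a. d y a \<noteq> 0"
  proof (rule ccontr)
    assume "\<not> ?thesis"
    then have "g = ?gs" by (auto simp: d_def fun_eq_iff)
    then show False using gh by simp
  qed
  have "(\<Sum>y\<in>UNIV. \<Sum>a\<in>UNIV. d y a * umix u1 \<alpha>2 y a) < 0"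
    using cyc_neg[OF cm rows cols neg nz] .
  then show "(\<Sum>y\<in>UNIV. \<Sum>a\<in>UNIV. g y a * umix u1 \<alpha>2 y a) < (\<Sum>y\<in>UNIV. \<Sum>a\<in>UNIV. ?gs y a * umix u1 \<alpha>2 y a)"
    by (simp add: d_def left_diff_distrib sum_subtractf)
qed

theorem corollary1:
  fixes rho0 :: "'a0::finite \<Rightarrow> 'y0::finite \<Rightarrow> real"
    and rho1 :: "'a1::finite \<Rightarrow> 'a2::finite \<Rightarrow> 'y1::finite \<Rightarrow> real"
    and u0 :: "'a0 \<Rightarrow> 'a1 \<Rightarrow> real"
    and u1 u2 :: "'y0 \<Rightarrow> 'a1 \<Rightarrow> 'a2 \<Rightarrow> real"
    and s :: "'y0 \<Rightarrow> 'a1 \<Rightarrow> real"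
  assumes rho0_dist: "\<forall>a0. is_dist (rho0 a0)"
    and rho1_dist: "\<forall>a1 a2. is_dist (rho1 a1 a2)"
    and full_support: "\<forall>a0 y0. rho0 a0 y0 > 0"
    and supp_indep: "\<forall>y1 a1 a2 a2'. rho1 a1 a2 y1 > 0 \<longrightarrow> rho1 a1 a2' y1 > 0"
    and lin_indep: "\<forall>a2 c. (\<forall>y1. (\<Sum>a1\<in>UNIV. c a1 * rho1 a1 a2 y1) = 0) \<longrightarrow> (\<forall>a1. c a1 = 0)"
    and s_strat: "is_strat s"
  shows "(confound_defeating rho0 rho1 u0 u1 u2 s \<longleftrightarrow>
           (\<forall>(\<alpha>0, \<alpha>2) \<in> BReta rho0 rho1 u0 u2 0 s. strictly_cm (supp1 s) (umix u1 \<alpha>2)))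
       \<and> (strictly_cyc_separable u1 \<longrightarrow>
           (confound_defeating rho0 rho1 u0 u1 u2 s \<longleftrightarrow> strictly_u1_cm u1 (supp1 s)))"
proof -
  define B0 where "B0 = BReta rho0 rho1 u0 u2 0 s"
  have P1: "confound_defeating rho0 rho1 u0 u1 u2 s \<longleftrightarrow> (\<forall>(\<alpha>0, \<alpha>2) \<in> B0. strictly_cm (supp1 s) (umix u1 \<alpha>2))"
  proof
    assume CD: "confound_defeating rho0 rho1 u0 u1 u2 s"
    show "\<forall>(\<alpha>0, \<alpha>2) \<in> B0. strictly_cm (supp1 s) (umix u1 \<alpha>2)"
    proof (intro ballI)
      fix x assume xB: "x \<in> B0"
      obtain \<alpha>0 \<alpha>2 where x: "x = (\<alpha>0, \<alpha>2)" by (cases x)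
      have mem: "(\<alpha>0, \<alpha>2) \<in> B0" using xB x by simp
      have a0d: "is_dist \<alpha>0" and a2d: "is_dist \<alpha>2" using BReta_dist mem unfolding B0_def by blast+
      have "strictly_cm (supp1 s) (umix u1 \<alpha>2)"
      proof (rule ccontr)
        assume "\<not> strictly_cm (supp1 s) (umix u1 \<alpha>2)"
        then obtain xs where xsne: "xs \<noteq> []" and xsS: "set xs \<subseteq> supp1 s" and sets: "set xs \<noteq> set (shift_pairs xs)"
          and le: "(\<Sum>p\<leftarrow>xs. umix u1 \<alpha>2 (fst p) (snd p)) \<le> (\<Sum>p\<leftarrow>shift_pairs xs. umix u1 \<alpha>2 (fst p) (snd p))"
          unfolding strictly_cm_def by (auto simp: not_less)
        obtain s2 where s2s: "is_strat s2" and gne: "gam rho0 \<alpha>0 s2 \<noteq> gam rho0 \<alpha>0 s"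
          and phieq: "phi rho0 \<alpha>0 s2 = phi rho0 \<alpha>0 s"
          and vle: "(\<Sum>y\<in>UNIV. \<Sum>a\<in>UNIV. gam rho0 \<alpha>0 s y a * umix u1 \<alpha>2 y a) \<le> (\<Sum>y\<in>UNIV. \<Sum>a\<in>UNIV. gam rho0 \<alpha>0 s2 y a * umix u1 \<alpha>2 y a)"
          using pert[OF s_strat a0d full_support xsne xsS sets le] by blast
        from CD consider "CD1 rho0 rho1 u0 u1 u2 s" | "CD2 rho0 rho1 u0 u1 u2 s"
          unfolding confound_defeating_def by blast
        then show False
        proof cases
          case 2
          then have "\<forall>x\<in>B0. case x of (\<alpha>0, \<alpha>2) \<Rightarrow>
              coupling (rho_marg rho0 \<alpha>0) (phi rho0 \<alpha>0 s) (gam rho0 \<alpha>0 s) \<and>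
              (\<forall>g. coupling (rho_marg rho0 \<alpha>0) (phi rho0 \<alpha>0 s) g \<and> g \<noteq> gam rho0 \<alpha>0 s \<longrightarrow>
                 (\<Sum>y\<in>UNIV. \<Sum>a\<in>UNIV. g y a * umix u1 \<alpha>2 y a) < (\<Sum>y\<in>UNIV. \<Sum>a\<in>UNIV. gam rho0 \<alpha>0 s y a * umix u1 \<alpha>2 y a))"
            unfolding CD2_def Let_def B0_def by simp
          from bspec[OF this mem] have
            H: "\<forall>g. coupling (rho_marg rho0 \<alpha>0) (phi rho0 \<alpha>0 s) g \<and> g \<noteq> gam rho0 \<alpha>0 s \<longrightarrow>
                 (\<Sum>y\<in>UNIV. \<Sum>a\<in>UNIV. g y a * umix u1 \<alpha>2 y a) < (\<Sum>y\<in>UNIV. \<Sum>a\<in>UNIV. gam rho0 \<alpha>0 s y a * umix u1 \<alpha>2 y a)"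
            by simp
          have "coupling (rho_marg rho0 \<alpha>0) (phi rho0 \<alpha>0 s) (gam rho0 \<alpha>0 s2)"
            using coupling_gam[OF s2s a0d rho0_dist full_support] phieq by simp
          with H gne vle show False by force
        next
          case 1
          define m1 where "m1 = rho_marg rho0 \<alpha>0"
          have pd: "pdist rho0 rho1 \<alpha>0 t \<alpha>2 = pdist rho0 rho1 \<alpha>0 s \<alpha>2 \<longleftrightarrow>
              (\<forall>y1. (\<Sum>y\<in>UNIV. \<Sum>a\<in>UNIV. (m1 y * (\<Sum>a2\<in>UNIV. \<alpha>2 a2 * rho1 a a2 y1)) * t y a) = pdist rho0 rho1 \<alpha>0 s \<alpha>2 y1)" for t
            unfolding m1_def by (simp add: fun_eq_iff pdist_lin[of _ _ _ t])
          have ui: "Ui rho0 u1 \<alpha>0 t \<alpha>2 = (\<Sum>y\<in>UNIV. \<Sum>a\<in>UNIV. (m1 y * umix u1 \<alpha>2 y a) * t y a)" for t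
            unfolding m1_def by (rule Ui_lin)
          obtain sm where sms: "is_strat sm" and smp: "pdist rho0 rho1 \<alpha>0 sm \<alpha>2 = pdist rho0 rho1 \<alpha>0 s \<alpha>2"
            and smx: "\<forall>t. is_strat t \<and> pdist rho0 rho1 \<alpha>0 t \<alpha>2 = pdist rho0 rho1 \<alpha>0 s \<alpha>2 \<longrightarrow>
                 Ui rho0 u1 \<alpha>0 t \<alpha>2 \<le> Ui rho0 u1 \<alpha>0 sm \<alpha>2"
            using exists_max[OF s_strat, of "\<lambda>y1 y a. m1 y * (\<Sum>a2\<in>UNIV. \<alpha>2 a2 * rho1 a a2 y1)"
                "pdist rho0 rho1 \<alpha>0 s \<alpha>2" "\<lambda>y a. m1 y * umix u1 \<alpha>2 y a"]
            unfolding pd[symmetric] ui[symmetric] by blast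
          have s2p: "pdist rho0 rho1 \<alpha>0 s2 \<alpha>2 = pdist rho0 rho1 \<alpha>0 s \<alpha>2"
            by (simp add: fun_eq_iff pdist_phi[of _ _ _ s2] pdist_phi[of _ _ _ s] phieq)
          have s2u: "Ui rho0 u1 \<alpha>0 s \<alpha>2 \<le> Ui rho0 u1 \<alpha>0 s2 \<alpha>2" using vle by (simp add: Ui_val)
          have s2ne: "s2 \<noteq> s" using gne by auto
          obtain s' where s's: "is_strat s'" and s'ne: "s' \<noteq> s" and s'p: "pdist rho0 rho1 \<alpha>0 s' \<alpha>2 = pdist rho0 rho1 \<alpha>0 s \<alpha>2"
            and s'x: "\<forall>t. is_strat t \<and> pdist rho0 rho1 \<alpha>0 t \<alpha>2 = pdist rho0 rho1 \<alpha>0 s \<alpha>2 \<longrightarrow>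
                 Ui rho0 u1 \<alpha>0 t \<alpha>2 \<le> Ui rho0 u1 \<alpha>0 s' \<alpha>2"
          proof (cases "sm = s")
            case True
            show ?thesis
            proof (rule that[OF s2s s2ne s2p], intro allI impI)
              fix t assume "is_strat t \<and> pdist rho0 rho1 \<alpha>0 t \<alpha>2 = pdist rho0 rho1 \<alpha>0 s \<alpha>2"
              then have "Ui rho0 u1 \<alpha>0 t \<alpha>2 \<le> Ui rho0 u1 \<alpha>0 sm \<alpha>2" using smx by blast
              then show "Ui rho0 u1 \<alpha>0 t \<alpha>2 \<le> Ui rho0 u1 \<alpha>0 s2 \<alpha>2" using s2u True by simp
            qed
          next
            case False
            then show ?thesis using that[OF sms False smp smx] by blast
          qed
          obtain y a where ya: "s' y a - s y a \<noteq> 0" using s'ne by (auto simp: fun_eq_iff)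
          define \<epsilon> where "\<epsilon> = supn2 (\<lambda>y a. s' y a - s y a) / 2"
          have sp: "supn2 (\<lambda>y a. s' y a - s y a) > 0" using supn2_pos[of "\<lambda>y a. s' y a - s y a", OF ya] .
          then have ep: "\<epsilon> > 0" and epl: "supn2 (\<lambda>y a. s' y a - s y a) > \<epsilon>" by (simp_all add: \<epsilon>_def)
          from 1 ep obtain \<eta> where \<eta>: "\<eta> > 0" and
            H: "\<forall>x\<in>BReta rho0 rho1 u0 u2 \<eta> s. case x of (\<alpha>0, \<alpha>2) \<Rightarrow> \<forall>s'.
              is_strat s' \<and> supn2 (\<lambda>y a. s' y a - s y a) > \<epsilon> \<and>
              supn (\<lambda>y1. pdist rho0 rho1 \<alpha>0 s' \<alpha>2 y1 - pdist rho0 rho1 \<alpha>0 s \<alpha>2 y1) < \<eta> \<longrightarrow>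
              (\<exists>st. is_strat st \<and> pdist rho0 rho1 \<alpha>0 st \<alpha>2 = pdist rho0 rho1 \<alpha>0 s' \<alpha>2 \<and>
                    Ui rho0 u1 \<alpha>0 st \<alpha>2 > Ui rho0 u1 \<alpha>0 s' \<alpha>2)"
            unfolding CD1_def by blast
          have memeta: "(\<alpha>0, \<alpha>2) \<in> BReta rho0 rho1 u0 u2 \<eta> s"
            by (rule BReta_mono) (use mem \<eta> in \<open>auto simp: B0_def\<close>)
          have supz: "supn (\<lambda>y1. pdist rho0 rho1 \<alpha>0 s' \<alpha>2 y1 - pdist rho0 rho1 \<alpha>0 s \<alpha>2 y1) < \<eta>"
            using s'p \<eta> by (simp add: supn_zero)
          from bspec[OF H memeta] s's epl supz obtain st where
            "is_strat st" "pdist rho0 rho1 \<alpha>0 st \<alpha>2 = pdist rho0 rho1 \<alpha>0 s' \<alpha>2"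
            "Ui rho0 u1 \<alpha>0 st \<alpha>2 > Ui rho0 u1 \<alpha>0 s' \<alpha>2" by auto
          then show False using s'x s'p by force
        qed
      qed
      then show "case x of (\<alpha>0, \<alpha>2) \<Rightarrow> strictly_cm (supp1 s) (umix u1 \<alpha>2)" using x by simp
    qed
  next
    assume H: "\<forall>(\<alpha>0, \<alpha>2) \<in> B0. strictly_cm (supp1 s) (umix u1 \<alpha>2)"
    have "CD2 rho0 rho1 u0 u1 u2 s"
      unfolding CD2_def Let_def B0_def[symmetric]
    proof (intro ballI)
      fix x assume xB: "x \<in> B0"
      obtain \<alpha>0 \<alpha>2 where x: "x = (\<alpha>0, \<alpha>2)" by (cases x)
      have mem: "(\<alpha>0, \<alpha>2) \<in> B0" using xB x by simp
      have a0d: "is_dist \<alpha>0" using BReta_dist mem unfolding B0_def by blast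
      have cm: "strictly_cm (supp1 s) (umix u1 \<alpha>2)" using H mem by auto
      show "case x of (\<alpha>0, \<alpha>2) \<Rightarrow>
          coupling (rho_marg rho0 \<alpha>0) (phi rho0 \<alpha>0 s) (gam rho0 \<alpha>0 s) \<and>
          (\<forall>g. coupling (rho_marg rho0 \<alpha>0) (phi rho0 \<alpha>0 s) g \<and> g \<noteq> gam rho0 \<alpha>0 s \<longrightarrow>
            (\<Sum>y\<in>UNIV. \<Sum>a\<in>UNIV. g y a * umix u1 \<alpha>2 y a) < (\<Sum>y\<in>UNIV. \<Sum>a\<in>UNIV. gam rho0 \<alpha>0 s y a * umix u1 \<alpha>2 y a))"
        using CM_point[OF s_strat a0d rho0_dist full_support cm] x by simp
    qed
    then show "confound_defeating rho0 rho1 u0 u1 u2 s" unfolding confound_defeating_def by simp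
  qed
  obtain a0 where a0: "\<forall>b. U0 rho0 u0 b s \<le> U0 rho0 u0 a0 s" using ex_argmax[of "\<lambda>b. U0 rho0 u0 b s"] by blast
  define \<alpha>0 :: "'a0 \<Rightarrow> real" where "\<alpha>0 = (\<lambda>x. if x = a0 then 1 else 0)"
  obtain a2 where a2: "\<forall>b. Ui rho0 u2 \<alpha>0 s (\<lambda>x. if x = b then 1 else 0) \<le> Ui rho0 u2 \<alpha>0 s (\<lambda>x. if x = a2 then 1 else 0)"
    using ex_argmax[of "\<lambda>b. Ui rho0 u2 \<alpha>0 s (\<lambda>x. if x = b then 1 else 0)"] by blast
  define \<alpha>2 :: "'a2 \<Rightarrow> real" where "\<alpha>2 = (\<lambda>x. if x = a2 then 1 else 0)"
  have inBR: "(\<alpha>0, \<alpha>2) \<in> BR rho0 u0 u2 s"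
    unfolding BR_def using a0 a2 point_dist[of a0] point_dist[of a2] by (simp add: \<alpha>0_def \<alpha>2_def)
  have memB0: "(\<alpha>0, \<alpha>2) \<in> B0"
    unfolding B0_def BReta_def using inBR s_strat by (auto simp: supn_zero)
  have a2d: "is_dist \<alpha>2" using point_dist[of a2] by (simp add: \<alpha>2_def)
  have P2: "strictly_cyc_separable u1 \<longrightarrow>
           (confound_defeating rho0 rho1 u0 u1 u2 s \<longleftrightarrow> strictly_u1_cm u1 (supp1 s))"
  proof
    assume sep: "strictly_cyc_separable u1"
    show "confound_defeating rho0 rho1 u0 u1 u2 s \<longleftrightarrow> strictly_u1_cm u1 (supp1 s)"
    proof
      assume "confound_defeating rho0 rho1 u0 u1 u2 s"
      then have "strictly_cm (supp1 s) (umix u1 \<alpha>2)" using P1 memB0 by auto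
      then show "strictly_u1_cm u1 (supp1 s)" using a2d unfolding strictly_u1_cm_def by blast
    next
      assume "strictly_u1_cm u1 (supp1 s)"
      then have all: "\<forall>\<beta>. is_dist \<beta> \<longrightarrow> strictly_cm (supp1 s) (umix u1 \<beta>)"
        using sep unfolding strictly_u1_cm_def strictly_cyc_separable_def by blast
      have "\<forall>(\<beta>0, \<beta>2) \<in> B0. strictly_cm (supp1 s) (umix u1 \<beta>2)"
      proof (intro ballI)
        fix x assume xB: "x \<in> B0"
        obtain \<beta>0 \<beta>2 where x: "x = (\<beta>0, \<beta>2)" by (cases x)
        have "is_dist \<beta>2" using BReta_dist xB x unfolding B0_def by blast
        then show "case x of (\<beta>0, \<beta>2) \<Rightarrow> strictly_cm (supp1 s) (umix u1 \<beta>2)" using all x by simp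
      qed
      then show "confound_defeating rho0 rho1 u0 u1 u2 s" using P1 by simp
    qed
  qed
  show ?thesis using P1 P2 unfolding B0_def by simp
qed

end
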